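(* Let $n\ge5$ be odd and $M$ an $n\times n$ HW-matrix. There is no spin$^c$ set $S$ for $M$ with $|S|=n$.
   Context: $\mathcal S=\{0,1,2,3\}$ is the Klein four-group ($\mathbb Z_2$-vector space) with $x+x=0$, $1+2=3$, $1+3=2$, $2+3=1$. $\mathcal P_n$ is the power set of $\{1,\dots,n\}$ (addition = symmetric difference, product = intersection); $|U|_2=|U|\bmod 2$; $J_M(U)=\{j:\sum_{i\in U}M_{ij}=1\}$. $M$ is an HW-matrix if it has $1$ on the diagonal and $2$ or $3$ off the diagonal, all column sums are $0$, and $J_M(U)\ne\emptyset$ for all $U\ne\emptyset,\{1,\dots,n\}$. $S\in\mathcal P_n$ is a spin$^c$ set for $M$ if $|(J_M(U)+U)\cap S|_2=\binom{|U|}2\bmod 2$ for all $U\in\mathcal P_n$. *)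

theory Defs
  imports Main "HOL-Library.Z2" "HOL-Library.Product_Plus"
begin

text \<open>The Klein four-group S = {0,1,2,3} as the Z2-vector space bit x bit:
  0 = (0,0), 1 = (1,0), 2 = (0,1), 3 = (1,1); addition is componentwise,
  so x + x = 0, 1 + 2 = 3, 1 + 3 = 2, 2 + 3 = 1.\<close>
type_synonym klein = "bit \<times> bit"

definition k0 :: klein where "k0 = (0, 0)"
definition k1 :: klein where "k1 = (1, 0)"
definition k2 :: klein where "k2 = (0, 1)"
definition k3 :: klein where "k3 = (1, 1)"

text \<open>An n x n matrix with entries in S, indexed by {1..n}.\<close>
type_synonym kmatrix = "nat \<Rightarrow> nat \<Rightarrow> klein"

definition symdiff :: "'a set \<Rightarrow> 'a set \<Rightarrow> 'a set" where
  "symdiff A B = (A - B) \<union> (B - A)"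

definition J :: "kmatrix \<Rightarrow> nat \<Rightarrow> nat set \<Rightarrow> nat set" where
  "J M n U = {j \<in> {1..n}. (\<Sum>i\<in>U. M i j) = k1}"

definition HW_matrix :: "nat \<Rightarrow> kmatrix \<Rightarrow> bool" where
  "HW_matrix n M \<longleftrightarrow>
     (\<forall>i\<in>{1..n}. M i i = k1) \<and>
     (\<forall>i\<in>{1..n}. \<forall>j\<in>{1..n}. i \<noteq> j \<longrightarrow> M i j = k2 \<or> M i j = k3) \<and>
     (\<forall>j\<in>{1..n}. (\<Sum>i\<in>{1..n}. M i j) = k0) \<and>
     (\<forall>U. U \<subseteq> {1..n} \<and> U \<noteq> {} \<and> U \<noteq> {1..n} \<longrightarrow> J M n U \<noteq> {})"

definition spinc_set :: "nat \<Rightarrow> kmatrix \<Rightarrow> nat set \<Rightarrow> bool" where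
  "spinc_set n M S \<longleftrightarrow> S \<subseteq> {1..n} \<and>
     (\<forall>U. U \<subseteq> {1..n} \<longrightarrow>
        card (symdiff (J M n U) U \<inter> S) mod 2 = (card U choose 2) mod 2)"

end

theory Submission
  imports Defs
begin

definition Inn :: "kmatrix \<Rightarrow> nat \<Rightarrow> nat \<Rightarrow> nat set" where
  "Inn M n j = {i \<in> {1..n}. i \<noteq> j \<and> M i j = k3}"

lemma kdist: "k1 \<noteq> k2" "k1 \<noteq> k3" "k2 \<noteq> k3" "k0 \<noteq> k1"
  by (simp_all add: k0_def k1_def k2_def k3_def)

lemma offd: "HW_matrix n M \<Longrightarrow> i \<in> {1..n} \<Longrightarrow> j \<in> {1..n} \<Longrightarrow> i \<noteq> j \<Longrightarrow> M i j = k2 \<or> M i j = k3"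
  unfolding HW_matrix_def by blast

lemma diag: "HW_matrix n M \<Longrightarrow> i \<in> {1..n} \<Longrightarrow> M i i = k1"
  unfolding HW_matrix_def by blast

lemma in_odd:
  assumes hw: "HW_matrix n M" and j: "j \<in> {1..n}"
  shows "odd (card (Inn M n j))"
proof -
  have cs: "(\<Sum>i\<in>{1..n}. M i j) = k0" using hw j unfolding HW_matrix_def by blast
  have "fst (\<Sum>i\<in>{1..n}. M i j) = (\<Sum>i\<in>{1..n}. fst (M i j))" by (simp add: fst_sum)
  also have "\<dots> = (\<Sum>i\<in>{1..n}. of_bool (i = j \<or> M i j = k3))"
  proof (rule sum.cong)
    fix i assume i: "i \<in> {1..n}"
    show "fst (M i j) = of_bool (i = j \<or> M i j = k3)"
    proof (cases "i = j")
      case True thus ?thesis using diag[OF hw i] by (simp add: k1_def)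
    next
      case False thus ?thesis using offd[OF hw i j False] by (auto simp: k2_def k3_def)
    qed
  qed simp
  also have "\<dots> = of_nat (card ({1..n} \<inter> {i. i = j \<or> M i j = k3}))"
    by (rule sum_of_bool_eq) simp_all
  finally have "of_nat (card ({1..n} \<inter> {i. i = j \<or> M i j = k3})) = (0::bit)"
    using cs by (simp add: k0_def)
  moreover have "{1..n} \<inter> {i. i = j \<or> M i j = k3} = insert j (Inn M n j)"
    using j by (auto simp: Inn_def)
  moreover have "finite (Inn M n j)" "j \<notin> Inn M n j" by (auto simp: Inn_def)
  moreover have "(of_nat m :: bit) = (if even m then 0 else 1)" for m
    by (induction m) auto
  ultimately show ?thesis by (auto split: if_splits)
qed


lemma ksum3: "x \<in> {k2,k3} \<Longrightarrow> y \<in> {k2,k3} \<Longrightarrow> z \<in> {k2,k3} \<Longrightarrow> x + (y + z) \<noteq> k1"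
  by (auto simp: k1_def k2_def k3_def)
lemma bz: "((a::bit) + c = 0) = (a = c)"
  by (cases a; cases c) auto
lemma kz[simp]: "((y::klein) + z = 0) = (y = z)"
  by (cases y; cases z) (auto simp: zero_prod_def bz)

lemma card3: assumes "i \<noteq> k" "i \<noteq> l" "k \<noteq> l"
  shows "card {m. (m = i \<and> A) \<or> (m = k \<and> B) \<or> (m = l \<and> C)} = of_bool A + of_bool B + of_bool C"
proof (cases A; cases B; cases C)
qed (use assms in \<open>simp_all add: Collect_disj_eq\<close>)

lemma J3:
  assumes hw: "HW_matrix n M" and V: "i \<in> {1..n}" "k \<in> {1..n}" "l \<in> {1..n}"
    and d: "i \<noteq> k" "i \<noteq> l" "k \<noteq> l"
  shows "J M n {i,k,l} = {m. (m = i \<and> M k i = M l i) \<or> (m = k \<and> M i k = M l k) \<or> (m = l \<and> M i l = M k l)}"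
proof -
  have off: "\<And>a b. a \<in> {1..n} \<Longrightarrow> b \<in> {1..n} \<Longrightarrow> a \<noteq> b \<Longrightarrow> M a b \<in> {k2,k3}"
    using offd[OF hw] by blast
  have s: "(\<Sum>m\<in>{i,k,l}. M m j) = M i j + (M k j + M l j)" for j using d by simp
  show ?thesis
  proof (rule set_eqI)
    fix j
    show "j \<in> J M n {i,k,l} \<longleftrightarrow> j \<in> {m. (m = i \<and> M k i = M l i) \<or> (m = k \<and> M i k = M l k) \<or> (m = l \<and> M i l = M k l)}"
    proof (cases "j \<in> {1..n}")
      case False thus ?thesis using V by (auto simp: J_def)
    next
      case jV: True
      show ?thesis
      proof (cases "j = i \<or> j = k \<or> j = l")
        case False
        hence "M i j + (M k j + M l j) \<noteq> k1" using off V jV by (intro ksum3) auto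
        thus ?thesis using False by (auto simp: J_def s)
      next
        case True
        then consider "j = i" | "j = k" | "j = l" by blast
        thus ?thesis
        proof cases
          case 1 thus ?thesis using d V jV off diag[OF hw] by (auto simp: J_def s)
        next
          case 2 thus ?thesis using d V jV off diag[OF hw] by (auto simp: J_def s add.left_commute)
        next
          case 3 thus ?thesis using d V jV off diag[OF hw] by (auto simp: J_def s add.left_commute add.commute)
        qed
      qed
    qed
  qed
qed

lemma Jne: "HW_matrix n M \<Longrightarrow> U \<subseteq> {1..n} \<Longrightarrow> U \<noteq> {} \<Longrightarrow> U \<noteq> {1..n} \<Longrightarrow> J M n U \<noteq> {}"
  unfolding HW_matrix_def by blast

lemma bad:
  assumes hw: "HW_matrix n M" and n4: "n \<ge> 4" and V: "i \<in> {1..n}" "k \<in> {1..n}" "l \<in> {1..n}"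
    and d: "i \<noteq> k" "i \<noteq> l" "k \<noteq> l"
    and c: "M k i \<noteq> M l i" "M i k \<noteq> M l k" "M i l \<noteq> M k l"
  shows False
proof -
  have "J M n {i,k,l} = {}" using J3[OF hw V d] c by auto
  moreover have "{i,k,l} \<noteq> {1..n}"
  proof
    assume "{i,k,l} = {1..n}"
    hence "card {i,k,l} = n" by simp
    thus False using d n4 by simp
  qed
  moreover have "{i,k,l} \<subseteq> {1..n}" using V by auto
  ultimately show False using Jne[OF hw] by blast
qed

lemma bool3: "(of_bool (\<not> a) + of_bool (\<not> b) + of_bool (\<not> c)) mod 2 = (1::nat) \<Longrightarrow> (\<not> a) = (b = c)"
  by (cases a; cases b; cases c) auto

lemma spin3:
  assumes hw: "HW_matrix n M" and sp: "spinc_set n M {1..n}" and V: "i \<in> {1..n}" "k \<in> {1..n}" "l \<in> {1..n}"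
    and d: "i \<noteq> k" "i \<noteq> l" "k \<noteq> l"
  shows "(M k i \<noteq> M l i) = ((M i k = M l k) = (M i l = M k l))"
proof -
  let ?U = "{i,k,l}"
  have "card (symdiff (J M n ?U) ?U \<inter> {1..n}) mod 2 = (card ?U choose 2) mod 2"
  proof -
    have "?U \<subseteq> {1..n}" using V by auto
    thus ?thesis using sp unfolding spinc_set_def by blast
  qed
  moreover have "card ?U = 3" using d by simp
  moreover have "symdiff (J M n ?U) ?U \<inter> {1..n} = {m. (m = i \<and> M k i \<noteq> M l i) \<or> (m = k \<and> M i k \<noteq> M l k) \<or> (m = l \<and> M i l \<noteq> M k l)}"
    unfolding J3[OF hw V d] symdiff_def
  proof (rule set_eqI)
    fix m show "m \<in> ({m. (m = i \<and> M k i = M l i) \<or> (m = k \<and> M i k = M l k) \<or> (m = l \<and> M i l = M k l)} - ?U \<union> (?U - {m. (m = i \<and> M k i = M l i) \<or> (m = k \<and> M i k = M l k) \<or> (m = l \<and> M i l = M k l)})) \<inter> {1..n}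
      \<longleftrightarrow> m \<in> {m. (m = i \<and> M k i \<noteq> M l i) \<or> (m = k \<and> M i k \<noteq> M l k) \<or> (m = l \<and> M i l \<noteq> M k l)}"
      by (cases "m = i"; cases "m = k"; cases "m = l") (use V d in simp_all)
  qed
  ultimately have h: "card {m. (m = i \<and> M k i \<noteq> M l i) \<or> (m = k \<and> M i k \<noteq> M l k) \<or> (m = l \<and> M i l \<noteq> M k l)} mod 2 = 1"
    by (simp add: choose_two)
  hence "(of_bool (M k i \<noteq> M l i) + of_bool (M i k \<noteq> M l k) + of_bool (M i l \<noteq> M k l)) mod 2 = (1::nat)"
    using card3[OF d] by simp
  thus ?thesis by (rule bool3[of "M k i = M l i" "M i k = M l k" "M i l = M k l"])
qed


definition RR :: "kmatrix \<Rightarrow> nat \<Rightarrow> nat \<Rightarrow> bool" where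
  "RR M i k \<longleftrightarrow> M i k \<noteq> M k i"

lemma kdist2: "k2 \<noteq> k1" "k3 \<noteq> k1" "k3 \<noteq> k2" "k1 \<noteq> k0"
  by (simp_all add: k0_def k1_def k2_def k3_def)

lemma six:
  assumes "ki = k2 \<or> ki = k3" "li = k2 \<or> li = k3" "ik = k2 \<or> ik = k3"
    "lk = k2 \<or> lk = k3" "il = k2 \<or> il = k3" "kl = k2 \<or> kl = k3"
    and e: "(ki \<noteq> li) = ((ik = lk) = (il = kl))"
  shows "(ik \<noteq> ki \<longrightarrow> kl \<noteq> lk \<longrightarrow> il \<noteq> li) \<and> (ik = ki \<longrightarrow> il = li \<longrightarrow> kl \<noteq> lk)"
  using assms kdist kdist2 by (elim disjE) simp_all

lemma T1:
  assumes hw: "HW_matrix n M" and sp: "spinc_set n M {1..n}" and V: "i \<in> {1..n}" "k \<in> {1..n}" "l \<in> {1..n}"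
    and d: "i \<noteq> k" "i \<noteq> l" "k \<noteq> l"
  shows "RR M i k \<Longrightarrow> RR M k l \<Longrightarrow> RR M i l" and "\<not> RR M i k \<Longrightarrow> \<not> RR M i l \<Longrightarrow> RR M k l"
proof -
  have o: "\<And>a b. a \<in> {1..n} \<Longrightarrow> b \<in> {1..n} \<Longrightarrow> a \<noteq> b \<Longrightarrow> M a b = k2 \<or> M a b = k3"
    using offd[OF hw] by blast
  have "(M i k \<noteq> M k i \<longrightarrow> M k l \<noteq> M l k \<longrightarrow> M i l \<noteq> M l i) \<and> (M i k = M k i \<longrightarrow> M i l = M l i \<longrightarrow> M k l \<noteq> M l k)"
    by (rule six[OF o o o o o o spin3[OF hw sp V d]]) (use V d in auto)
  thus "RR M i k \<Longrightarrow> RR M k l \<Longrightarrow> RR M i l" and "\<not> RR M i k \<Longrightarrow> \<not> RR M i l \<Longrightarrow> RR M k l"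
    unfolding RR_def by auto
qed

lemma RR_sym: "RR M i k = RR M k i" unfolding RR_def by auto

lemma strict:
  assumes hw: "HW_matrix n M" and sp: "spinc_set n M {1..n}" and n4: "n \<ge> 4"
    and V: "i \<in> {1..n}" "j \<in> {1..n}" and d: "i \<noteq> j" and r: "RR M i j" and a: "M i j = k3"
  shows "card (Inn M n i) < card (Inn M n j)"
proof -
  have o: "\<And>a b. a \<in> {1..n} \<Longrightarrow> b \<in> {1..n} \<Longrightarrow> a \<noteq> b \<Longrightarrow> M a b = k2 \<or> M a b = k3"
    using offd[OF hw] by blast
  have ji: "M j i = k2" using o[OF V(2) V(1)] d r a unfolding RR_def by auto
  have sub: "Inn M n i \<subseteq> Inn M n j"
  proof
    fix k assume "k \<in> Inn M n i"
    hence kV: "k \<in> {1..n}" and ki: "k \<noteq> i" and mki: "M k i = k3" by (auto simp: Inn_def)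
    have kj: "k \<noteq> j" using mki ji kdist by auto
    have "M k j = k3"
    proof (rule ccontr)
      assume "M k j \<noteq> k3"
      hence mkj: "M k j = k2" using o[OF kV V(2) kj] by auto
      show False
      proof (cases "RR M k i")
        case True
        have "RR M k j" using T1(1)[OF hw sp kV V(1) V(2) ki kj d True r] .
        hence "M j k = k3" using mkj o[OF V(2) kV] kj unfolding RR_def by auto
        moreover have "M i k = k2" using True mki o[OF V(1) kV] ki unfolding RR_def by auto
        ultimately show False
          using bad[OF hw n4 V(1) V(2) kV d ki[symmetric] kj[symmetric]] ji mki a mkj kdist kdist2 by auto
      next
        case False
        have "\<not> RR M k j"
        proof
          assume "RR M k j"
          hence "RR M k i" using T1(1)[OF hw sp kV V(2) V(1) kj ki d[symmetric]] r RR_sym by blast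
          thus False using False by simp
        qed
        hence "M j k = k2" using mkj unfolding RR_def by auto
        moreover have "M i k = k3" using False mki unfolding RR_def by auto
        ultimately show False
          using bad[OF hw n4 V(1) V(2) kV d ki[symmetric] kj[symmetric]] ji mki a mkj kdist kdist2 by auto
      qed
    qed
    thus "k \<in> Inn M n j" using kV kj by (auto simp: Inn_def)
  qed
  have "i \<in> Inn M n j" "i \<notin> Inn M n i" using V d a by (auto simp: Inn_def)
  hence "Inn M n i \<subset> Inn M n j" using sub by blast
  moreover have "finite (Inn M n j)" by (auto simp: Inn_def)
  ultimately show ?thesis by (rule psubset_card_mono[rotated])
qed

lemma odd_count: "odd n \<Longrightarrow> card {d::nat. d < n \<and> odd d} \<le> n div 2"
proof -
  assume on: "odd n"
  have "{d::nat. d < n \<and> odd d} \<subseteq> (\<lambda>m. 2*m+1) ` {..<n div 2}"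
  proof
    fix d assume "d \<in> {d::nat. d < n \<and> odd d}"
    hence "d < n" "odd d" by auto
    then obtain m where "d = 2*m+1" by (meson oddE)
    moreover have "m < n div 2" using \<open>d < n\<close> on \<open>d = 2*m+1\<close> by (elim oddE) auto
    ultimately show "d \<in> (\<lambda>m. 2*m+1) ` {..<n div 2}" by auto
  qed
  hence "card {d::nat. d < n \<and> odd d} \<le> card ((\<lambda>m. 2*m+1) ` {..<n div 2})"
    by (rule card_mono[rotated]) auto
  also have "\<dots> \<le> card {..<n div 2}" by (rule card_image_le) auto
  finally show ?thesis by simp
qed

lemma clique_bound:
  assumes hw: "HW_matrix n M" and sp: "spinc_set n M {1..n}" and n4: "n \<ge> 4" and on: "odd n"
    and C: "C \<subseteq> {1..n}" and pw: "\<And>a b. a \<in> C \<Longrightarrow> b \<in> C \<Longrightarrow> a \<noteq> b \<Longrightarrow> RR M a b"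
  shows "card C \<le> n div 2"
proof -
  let ?f = "\<lambda>j. card (Inn M n j)"
  have o: "\<And>a b. a \<in> {1..n} \<Longrightarrow> b \<in> {1..n} \<Longrightarrow> a \<noteq> b \<Longrightarrow> M a b = k2 \<or> M a b = k3"
    using offd[OF hw] by blast
  have inj: "inj_on ?f C"
  proof (rule inj_onI, rule ccontr)
    fix a b assume a: "a \<in> C" and b: "b \<in> C" and e: "?f a = ?f b" and ne: "a \<noteq> b"
    have aV: "a \<in> {1..n}" and bV: "b \<in> {1..n}" using a b C by auto
    have r: "RR M a b" using pw a b ne .
    show False
    proof (cases "M a b = k3")
      case True
      thus False using strict[OF hw sp n4 aV bV ne r True] e by simp
    next
      case False
      hence "M a b = k2" using o[OF aV bV ne] by auto
      hence "M b a = k3" using r o[OF bV aV ne[symmetric]] unfolding RR_def by auto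
      thus False using strict[OF hw sp n4 bV aV ne[symmetric] r[unfolded RR_sym[of M a b]]] e by simp
    qed
  qed
  have img: "?f ` C \<subseteq> {d. d < n \<and> odd d}"
  proof
    fix d assume "d \<in> ?f ` C"
    then obtain j where j: "j \<in> C" "d = ?f j" by auto
    have jV: "j \<in> {1..n}" using j C by auto
    have "Inn M n j \<subseteq> {1..n} - {j}" by (auto simp: Inn_def)
    hence "card (Inn M n j) \<le> card ({1..n} - {j})" by (rule card_mono[rotated]) auto
    also have "\<dots> = n - 1" using jV by simp
    finally have "d < n" using j jV by auto
    moreover have "odd d" using in_odd[OF hw jV] j by simp
    ultimately show "d \<in> {d. d < n \<and> odd d}" by simp
  qed
  have "card C = card (?f ` C)" using inj by (simp add: card_image)
  also have "\<dots> \<le> card {d::nat. d < n \<and> odd d}" by (rule card_mono[OF _ img]) auto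
  also have "\<dots> \<le> n div 2" using odd_count[OF on] .
  finally show ?thesis .
qed

theorem mainTheorem15:
  fixes n :: nat and M :: kmatrix
  assumes "n \<ge> 5" and "odd n" and "HW_matrix n M"
  shows "\<not> (\<exists>S. spinc_set n M S \<and> card S = n)"
proof
  assume "\<exists>S. spinc_set n M S \<and> card S = n"
  then obtain S where S: "spinc_set n M S" "card S = n" by blast
  have hw: "HW_matrix n M" by fact
  have n4: "n \<ge> 4" using assms(1) by simp
  have "S \<subseteq> {1..n}" using S(1) unfolding spinc_set_def by blast
  hence "S = {1..n}" using S(2) by (intro card_subset_eq) auto
  hence sp: "spinc_set n M {1..n}" using S(1) by simp
  have oneV: "(1::nat) \<in> {1..n}" using n4 by simp
  define A where "A = {i \<in> {1..n}. i = 1 \<or> RR M 1 i}"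
  define B where "B = {i \<in> {1..n}. i \<noteq> 1 \<and> \<not> RR M 1 i}"
  have cA: "card A \<le> n div 2"
  proof (rule clique_bound[OF hw sp n4 assms(2)])
    show "A \<subseteq> {1..n}" by (auto simp: A_def)
    fix a b assume a: "a \<in> A" and b: "b \<in> A" and ne: "a \<noteq> b"
    show "RR M a b"
    proof (cases "a = 1 \<or> b = 1")
      case True thus ?thesis using a b ne RR_sym unfolding A_def by auto
    next
      case False
      hence "RR M 1 a" "RR M 1 b" "a \<in> {1..n}" "b \<in> {1..n}" using a b unfolding A_def by auto
      thus ?thesis using T1(1)[OF hw sp \<open>a \<in> {1..n}\<close> oneV \<open>b \<in> {1..n}\<close>] False ne RR_sym by metis
    qed
  qed
  have cB: "card B \<le> n div 2"
  proof (rule clique_bound[OF hw sp n4 assms(2)])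
    show "B \<subseteq> {1..n}" by (auto simp: B_def)
    fix a b assume a: "a \<in> B" and b: "b \<in> B" and ne: "a \<noteq> b"
    hence "\<not> RR M 1 a" "\<not> RR M 1 b" "a \<in> {1..n}" "b \<in> {1..n}" "a \<noteq> 1" "b \<noteq> 1"
      unfolding B_def by auto
    thus "RR M a b" using T1(2)[OF hw sp oneV \<open>a \<in> {1..n}\<close> \<open>b \<in> {1..n}\<close>] ne by metis
  qed
  have "{1..n} = A \<union> B" "A \<inter> B = {}" by (auto simp: A_def B_def)
  hence "card {1..n} = card A + card B"
    by (metis card_Un_disjoint finite_Un finite_atLeastAtMost)
  hence "n \<le> 2 * (n div 2)" using cA cB by simp
  thus False using assms(2) by (elim oddE) auto
qed

end
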